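(* Let $N\ge1$, $\Psi_N$, $\Lambda_N$, $J_N$ be as follows: $(\Psi_N)_{jk}=\binom{j}{k}$ for $0\le j,k<N$; $\Lambda_N=\mathrm{diag}(1,-1,\dots,(-1)^{N-1})$; $J_N$ is the symmetric tridiagonal matrix with $(J_N)_{kk}=k(2k^2+3k+2-N^2)$ and $(J_N)_{k,k+1}=(J_N)_{k+1,k}=(k+1)(N^2-(k+1)^2)$. If $\vec v$ is an eigenvector of $J_N$ with eigenvalue $\lambda$, then $\Psi_N\Lambda_N\vec v$ (the signed binomial transform $w_j=\sum_{k=0}^{N-1}\binom{j}{k}(-1)^kv_k$) is an eigenvector of $J_N$ with eigenvalue $N^2-1-\lambda$. In particular, the spectrum of $J_N$ is invariant under $\lambda\mapsto N^2-1-\lambda$.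
   Context: Matrix indices start at $0$. *)

theory Defs
  imports Complex_Main "Jordan_Normal_Form.Char_Poly"
begin

definition Psi_mat :: "nat \<Rightarrow> complex mat" where
  "Psi_mat N = mat N N (\<lambda>(j, k). of_nat (j choose k))"

definition Lambda_mat :: "nat \<Rightarrow> complex mat" where
  "Lambda_mat N = mat N N (\<lambda>(j, k). if j = k then (-1) ^ k else 0)"

definition J_mat :: "nat \<Rightarrow> complex mat" where
  "J_mat N = mat N N (\<lambda>(j, k).
     if j = k then of_int (int k * (2 * int k ^ 2 + 3 * int k + 2 - int N ^ 2))
     else if k = j + 1 then of_int ((int j + 1) * (int N ^ 2 - (int j + 1) ^ 2))
     else if j = k + 1 then of_int ((int k + 1) * (int N ^ 2 - (int k + 1) ^ 2))
     else 0)"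

end

theory Submission
  imports Defs
begin

lemma core:
  fixes N i k :: nat
  shows "int i * (int N^2 - int i^2) * int ((i-1) choose k)
       + int i * (2*int i^2+3*int i+2-int N^2) * int (i choose k)
       + int (i+1) * (int N^2 - int (i+1)^2) * int ((i+1) choose k)
     = (int N^2 - 1) * int (i choose k)
       + int k * (int N^2 - int k^2) * int (i choose (k-1))
       - int k * (2*int k^2+3*int k+2-int N^2) * int (i choose k)
       + int (k+1) * (int N^2 - int (k+1)^2) * int (i choose (k+1))"
proof -
  consider "i + 1 < k" | "k = i + 1" | "k \<le> i" by linarith
  then show ?thesis
  proof cases
    case 1
    have z: "(i-1) choose k = 0" "i choose k = 0" "(i+1) choose k = 0" "i choose (k-1) = 0" "i choose (k+1) = 0"
      using 1 by (simp_all add: binomial_eq_0)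
    show ?thesis unfolding z by simp
  next
    case 2
    have z: "(i-1) choose k = 0" "i choose k = 0" "(i+1) choose k = 1" "i choose (k-1) = 1" "i choose (k+1) = 0"
      using 2 by (simp_all add: binomial_eq_0)
    show ?thesis unfolding z using 2 by simp
  next
    case 3
    define b where "b = int (i choose k)"
    have f1: "int i * int ((i-1) choose k) = (int i - int k) * b"
    proof -
      have "(i - k) * (i choose k) = i * ((i - 1) choose k)" by (rule binomial_absorb_comp)
      then have "int ((i - k) * (i choose k)) = int (i * ((i - 1) choose k))" by simp
      then show ?thesis using 3 by (simp add: b_def of_nat_diff)
    qed
    have g: "\<And>m. m \<le> i \<Longrightarrow> (int m + 1) * int (i choose (m+1)) = (int i - int m) * int (i choose m)"
    proof -
      fix m assume m: "m \<le> i"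
      have "Suc m * (i choose Suc m) = i * ((i - 1) choose m)" by (rule binomial_absorption)
      also have "\<dots> = (i - m) * (i choose m)" by (rule binomial_absorb_comp[symmetric])
      finally have "int (Suc m * (i choose Suc m)) = int ((i - m) * (i choose m))" by simp
      then show "(int m + 1) * int (i choose (m+1)) = (int i - int m) * int (i choose m)"
        using m by (simp add: of_nat_diff algebra_simps)
    qed
    have f2: "(int k + 1) * int (i choose (k+1)) = (int i - int k) * b"
      using g[OF 3] by (simp add: b_def)
    show ?thesis
    proof (cases k)
      case 0
      have e: "int i * (int N^2 - int i^2) * int ((i-1) choose k) = (int N^2 - int i^2) * (int i - int k) * b"
      proof -
        have "int i * (int N^2 - int i^2) * int ((i-1) choose k) = (int N^2 - int i^2) * (int i * int ((i-1) choose k))" by (simp add: algebra_simps)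
        then show ?thesis unfolding f1 by (simp add: algebra_simps)
      qed
      have e2: "int (k+1) * (int N^2 - int (k+1)^2) * int (i choose (k+1)) = (int N^2 - int (k+1)^2) * (int i - int k) * b"
      proof -
        have "int (k+1) * (int N^2 - int (k+1)^2) * int (i choose (k+1)) = (int N^2 - int (k+1)^2) * ((int k + 1) * int (i choose (k+1)))" by (simp add: algebra_simps)
        then show ?thesis unfolding f2 by (simp add: algebra_simps)
      qed
      show ?thesis unfolding e e2 using 0 by (simp add: b_def algebra_simps power2_eq_square)
    next
      case (Suc k')
      define W where "W = int (i choose (k-1))"
      have f3: "int k * b = (int i - int k + 1) * W"
        using g[of k'] 3 Suc by (simp add: b_def W_def add.commute)
      have pas: "int ((i+1) choose k) = b + W" using Suc by (simp add: b_def W_def)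
      have e: "int i * (int N^2 - int i^2) * int ((i-1) choose k) = (int N^2 - int i^2) * (int i - int k) * b"
      proof -
        have "int i * (int N^2 - int i^2) * int ((i-1) choose k) = (int N^2 - int i^2) * (int i * int ((i-1) choose k))" by (simp add: algebra_simps)
        then show ?thesis unfolding f1 by (simp add: algebra_simps)
      qed
      have e2: "int (k+1) * (int N^2 - int (k+1)^2) * int (i choose (k+1)) = (int N^2 - int (k+1)^2) * (int i - int k) * b"
      proof -
        have "int (k+1) * (int N^2 - int (k+1)^2) * int (i choose (k+1)) = (int N^2 - int (k+1)^2) * ((int k + 1) * int (i choose (k+1)))" by (simp add: algebra_simps)
        then show ?thesis unfolding f2 by (simp add: algebra_simps)
      qed
      have e3: "int (i+1) * (int N^2 - int (i+1)^2) * (b + W) - int k * (int N^2 - int k^2) * W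
          = int (i+1) * (int N^2 - int (i+1)^2) * b
            + (int N^2 - ((int i+1)^2 + (int i+1)*int k + int k^2)) * (int k * b)"
      proof -
        have "int (i+1) * (int N^2 - int (i+1)^2) - int k * (int N^2 - int k^2)
             = (int i - int k + 1) * (int N^2 - ((int i+1)^2 + (int i+1)*int k + int k^2))"
          by (simp add: algebra_simps power2_eq_square power3_eq_cube)
        have "int (i+1) * (int N^2 - int (i+1)^2) * (b + W) - int k * (int N^2 - int k^2) * W
          = int (i+1) * (int N^2 - int (i+1)^2) * b + (int N^2 - ((int i+1)^2 + (int i+1)*int k + int k^2)) * ((int i - int k + 1) * W)"
          by (simp add: algebra_simps power2_eq_square)
        then show ?thesis unfolding f3 by simp
      qed
      have "int i * (int N^2 - int i^2) * int ((i-1) choose k)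
       + int i * (2*int i^2+3*int i+2-int N^2) * int (i choose k)
       + int (i+1) * (int N^2 - int (i+1)^2) * int ((i+1) choose k)
       - int k * (int N^2 - int k^2) * int (i choose (k-1))
       = (int N^2 - int i^2) * (int i - int k) * b + int i * (2*int i^2+3*int i+2-int N^2) * b
         + int (i+1) * (int N^2 - int (i+1)^2) * b
            + (int N^2 - ((int i+1)^2 + (int i+1)*int k + int k^2)) * (int k * b)"
        using e e3 pas by (simp add: b_def W_def algebra_simps)
      also have "\<dots> = (int N^2 - 1) * b - int k * (2*int k^2+3*int k+2-int N^2) * b
          + (int N^2 - int (k+1)^2) * (int i - int k) * b"
        by (simp add: algebra_simps power2_eq_square)
      finally show ?thesis using e2 by (simp add: b_def algebra_simps)
    qed
  qed
qed


definition Af :: "nat \<Rightarrow> nat \<Rightarrow> int" where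
  "Af N i = int i * (int N^2 - int i^2)"
definition Df :: "nat \<Rightarrow> nat \<Rightarrow> int" where
  "Df N i = int i * (2*int i^2+3*int i+2-int N^2)"

definition Pm :: "nat \<Rightarrow> complex mat" where
  "Pm N = mat N N (\<lambda>(l, k). of_nat (l choose k) * (-1)^k)"

lemma J_entry: "j < N \<Longrightarrow> k < N \<Longrightarrow> J_mat N $$ (j,k) =
   of_int (if j = k then Df N j else if k = j+1 then Af N k else if j = k+1 then Af N j else 0)"
  unfolding J_mat_def Af_def Df_def by (auto simp: algebra_simps)

lemma J_sym: "j < N \<Longrightarrow> k < N \<Longrightarrow> J_mat N $$ (j,k) = J_mat N $$ (k,j)"
  by (auto simp: J_entry)

lemma J_carrier: "J_mat N \<in> carrier_mat N N" unfolding J_mat_def by simp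
lemma P_carrier: "Pm N \<in> carrier_mat N N" unfolding Pm_def by simp

lemma Af0: "Af N 0 = 0" by (simp add: Af_def)
lemma AfN: "Af N N = 0" by (simp add: Af_def)

lemma rowsum:
  fixes g :: "nat \<Rightarrow> complex"
  assumes i: "i < N"
  shows "(\<Sum>l\<in>{0..<N}. J_mat N $$ (i,l) * g l) =
     of_int (Af N i) * g (i-1) + of_int (Df N i) * g i + of_int (Af N (i+1)) * g (i+1)"
proof -
  have "(\<Sum>l\<in>{0..<N}. J_mat N $$ (i,l) * g l) =
     (\<Sum>l\<in>{0..<N}. (if l = i then of_int (Df N i) * g i else 0)
        + (if l = i+1 then of_int (Af N (i+1)) * g (i+1) else 0)
        + (if l = i - 1 then (if 0 < i then of_int (Af N i) * g (i-1) else 0) else 0))"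
  proof (rule sum.cong[OF refl])
    fix l assume "l \<in> {0..<N}"
    then have l: "l < N" by simp
    show "J_mat N $$ (i,l) * g l = (if l = i then of_int (Df N i) * g i else 0)
        + (if l = i+1 then of_int (Af N (i+1)) * g (i+1) else 0)
        + (if l = i - 1 then (if 0 < i then of_int (Af N i) * g (i-1) else 0) else 0)"
      using i l by (auto simp: J_entry)
  qed
  also have "\<dots> = of_int (Df N i) * g i + (if i + 1 < N then of_int (Af N (i+1)) * g (i+1) else 0)
      + (if 0 < i then of_int (Af N i) * g (i-1) else 0)"
    using i by (simp add: sum.distrib)
  also have "\<dots> = of_int (Af N i) * g (i-1) + of_int (Df N i) * g i + of_int (Af N (i+1)) * g (i+1)"
  proof -
    have "\<not> i + 1 < N \<Longrightarrow> i + 1 = N" using i by simp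
    then show ?thesis by (auto simp: Af0 AfN)
  qed
  finally show ?thesis .
qed

lemma core_c:
  fixes N i k :: nat
  shows "of_int (Af N i) * of_nat ((i-1) choose k) + of_int (Df N i) * of_nat (i choose k)
       + of_int (Af N (i+1)) * of_nat ((i+1) choose k)
     = ((of_nat N)^2 - 1) * of_nat (i choose k) + of_int (Af N k) * of_nat (i choose (k-1))
       - of_int (Df N k) * of_nat (i choose k) + of_int (Af N (k+1)) * (of_nat (i choose (k+1)) :: complex)"
proof -
  have "of_int (int i * (int N^2 - int i^2) * int ((i-1) choose k)
       + int i * (2*int i^2+3*int i+2-int N^2) * int (i choose k)
       + int (i+1) * (int N^2 - int (i+1)^2) * int ((i+1) choose k))
     = (of_int ((int N^2 - 1) * int (i choose k)
       + int k * (int N^2 - int k^2) * int (i choose (k-1))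
       - int k * (2*int k^2+3*int k+2-int N^2) * int (i choose k)
       + int (k+1) * (int N^2 - int (k+1)^2) * int (i choose (k+1))) :: complex)"
    using core[of i N k] by presburger
  then show ?thesis unfolding Af_def Df_def by simp
qed

lemma key: "J_mat N * Pm N = ((of_nat N)^2 - 1) \<cdot>\<^sub>m Pm N - Pm N * J_mat N"
proof (rule eq_matI)
  fix i k assume i: "i < dim_row (((of_nat N)^2 - 1) \<cdot>\<^sub>m Pm N - Pm N * J_mat N)"
    and k: "k < dim_col (((of_nat N)^2 - 1) \<cdot>\<^sub>m Pm N - Pm N * J_mat N)"
  have iN: "i < N" and kN: "k < N" using i k by (auto simp: Pm_def J_mat_def)
  define s :: complex where "s = (-1)^k"
  have L: "(J_mat N * Pm N) $$ (i,k) = (\<Sum>l\<in>{0..<N}. J_mat N $$ (i,l) * (of_nat (l choose k) * s))"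
    using iN kN by (auto simp: Pm_def J_mat_def scalar_prod_def s_def intro!: sum.cong)
  also have "\<dots> = (of_int (Af N i) * of_nat ((i-1) choose k) + of_int (Df N i) * of_nat (i choose k)
       + of_int (Af N (i+1)) * of_nat ((i+1) choose k)) * s"
    by (subst rowsum[OF iN]) (simp add: algebra_simps)
  finally have L: "(J_mat N * Pm N) $$ (i,k) = \<dots>" .
  have R1: "(Pm N * J_mat N) $$ (i,k) = (\<Sum>l\<in>{0..<N}. J_mat N $$ (k,l) * (of_nat (i choose l) * (-1)^l))"
    using iN kN by (auto simp: Pm_def J_mat_def scalar_prod_def J_sym intro!: sum.cong)
  also have "\<dots> = of_int (Af N k) * (of_nat (i choose (k-1)) * (-1)^(k-1))
     + of_int (Df N k) * (of_nat (i choose k) * s) + of_int (Af N (k+1)) * (of_nat (i choose (k+1)) * (-1)^(k+1))"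
    by (subst rowsum[OF kN]) (simp add: s_def)
  also have "\<dots> = (- of_int (Af N k) * of_nat (i choose (k-1))
     + of_int (Df N k) * of_nat (i choose k) - of_int (Af N (k+1)) * of_nat (i choose (k+1))) * s"
  proof (cases k)
    case 0 then show ?thesis by (simp add: s_def Af0 algebra_simps)
  next
    case (Suc k') then show ?thesis by (simp add: s_def algebra_simps)
  qed
  finally have R1: "(Pm N * J_mat N) $$ (i,k) = \<dots>" .
  have R: "(((of_nat N)^2 - 1) \<cdot>\<^sub>m Pm N - Pm N * J_mat N) $$ (i,k)
     = ((of_nat N)^2 - 1) * (of_nat (i choose k) * s) - (Pm N * J_mat N) $$ (i,k)"
    using iN kN by (simp add: Pm_def J_mat_def s_def)
  show "(J_mat N * Pm N) $$ (i,k) = (((of_nat N)^2 - 1) \<cdot>\<^sub>m Pm N - Pm N * J_mat N) $$ (i,k)"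
    unfolding R R1 L core_c by (simp add: algebra_simps)
qed (auto simp: Pm_def J_mat_def)

lemma PL: "Psi_mat N * Lambda_mat N = Pm N"
proof (rule eq_matI)
  fix i k assume "i < dim_row (Pm N)" "k < dim_col (Pm N)"
  then have iN: "i < N" and kN: "k < N" by (auto simp: Pm_def)
  have "(Psi_mat N * Lambda_mat N) $$ (i,k) = (\<Sum>l\<in>{0..<N}. of_nat (i choose l) * (if l = k then (-1)^k else 0))"
    using iN kN by (auto simp: Psi_mat_def Lambda_mat_def scalar_prod_def intro!: sum.cong)
  also have "\<dots> = (\<Sum>l\<in>{0..<N}. if l = k then of_nat (i choose k) * (-1)^k else 0)"
    by (rule sum.cong) auto
  also have "\<dots> = Pm N $$ (i,k)" using iN kN by (simp add: Pm_def)
  finally show "(Psi_mat N * Lambda_mat N) $$ (i,k) = Pm N $$ (i,k)" .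
qed (auto simp: Pm_def Psi_mat_def Lambda_mat_def)

lemma smult_mat_vec': "A \<in> carrier_mat nr nc \<Longrightarrow> v \<in> carrier_vec nc \<Longrightarrow>
   (k \<cdot>\<^sub>m A) *\<^sub>v v = k \<cdot>\<^sub>v (A *\<^sub>v (v :: complex vec))"
  by (intro eq_vecI) (auto simp: scalar_prod_def sum_distrib_left mult.assoc)

lemma det_P: "det (Pm N) \<noteq> 0"
proof -
  have "det (Pm N) = prod_list (diag_mat (Pm N))"
    by (rule det_lower_triangular[OF _ P_carrier[of N]]) (auto simp: Pm_def)
  moreover have "0 \<notin> set (diag_mat (Pm N))" by (auto simp: diag_mat_def Pm_def)
  ultimately show ?thesis by (simp add: prod_list_zero_iff)
qed

lemma ev_transform:
  assumes "eigenvector (J_mat N) v lam"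
  shows "eigenvector (J_mat N) (Pm N *\<^sub>v v) (of_nat N ^ 2 - 1 - lam)"
proof -
  have dr: "dim_row (J_mat N) = N" by (simp add: J_mat_def)
  from assms have v: "v \<in> carrier_vec N" and v0: "v \<noteq> 0\<^sub>v N" and Jv: "J_mat N *\<^sub>v v = lam \<cdot>\<^sub>v v"
    unfolding eigenvector_def dr by auto
  have Pv: "Pm N *\<^sub>v v \<in> carrier_vec N" by (rule mult_mat_vec_carrier[OF P_carrier[of N] v])
  have Pv0: "Pm N *\<^sub>v v \<noteq> 0\<^sub>v N"
    using det_0_iff_vec_prod_zero[OF P_carrier[of N]] det_P v v0 by blast
  have "J_mat N *\<^sub>v (Pm N *\<^sub>v v) = (J_mat N * Pm N) *\<^sub>v v"
    using J_carrier[of N] P_carrier[of N] v by simp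
  also have "\<dots> = (((of_nat N)^2 - 1) \<cdot>\<^sub>m Pm N) *\<^sub>v v - (Pm N * J_mat N) *\<^sub>v v"
    unfolding key using J_carrier[of N] P_carrier[of N] v by (intro minus_mult_distrib_mat_vec) auto
  also have "\<dots> = ((of_nat N)^2 - 1) \<cdot>\<^sub>v (Pm N *\<^sub>v v) - Pm N *\<^sub>v (lam \<cdot>\<^sub>v v)"
    using J_carrier[of N] P_carrier[of N] v by (simp add: smult_mat_vec'[OF P_carrier[of N] v] Jv[symmetric])
  also have "\<dots> = ((of_nat N)^2 - 1) \<cdot>\<^sub>v (Pm N *\<^sub>v v) - lam \<cdot>\<^sub>v (Pm N *\<^sub>v v)"
    using mult_mat_vec[OF P_carrier[of N] v] by simp
  also have "\<dots> = (of_nat N ^ 2 - 1 - lam) \<cdot>\<^sub>v (Pm N *\<^sub>v v)"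
    using Pv by (intro eq_vecI) (auto simp: algebra_simps)
  finally show ?thesis unfolding eigenvector_def dr using Pv Pv0 by simp
qed

theorem mainTheorem9:
  fixes N :: nat and v :: "complex vec" and lam :: complex
  assumes "N \<ge> 1"
    and "eigenvector (J_mat N) v lam"
  shows "eigenvector (J_mat N) ((Psi_mat N * Lambda_mat N) *\<^sub>v v) (of_nat N ^ 2 - 1 - lam)
       \<and> (\<forall>\<mu>. eigenvalue (J_mat N) \<mu> \<longleftrightarrow> eigenvalue (J_mat N) (of_nat N ^ 2 - 1 - \<mu>))"
proof
  show "eigenvector (J_mat N) ((Psi_mat N * Lambda_mat N) *\<^sub>v v) (of_nat N ^ 2 - 1 - lam)"
    unfolding PL by (rule ev_transform[OF assms(2)])
  have imp: "\<And>\<mu>. eigenvalue (J_mat N) \<mu> \<Longrightarrow> eigenvalue (J_mat N) (of_nat N ^ 2 - 1 - \<mu>)"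
    unfolding eigenvalue_def using ev_transform by blast
  show "\<forall>\<mu>. eigenvalue (J_mat N) \<mu> \<longleftrightarrow> eigenvalue (J_mat N) (of_nat N ^ 2 - 1 - \<mu>)"
  proof (intro allI iffI)
    fix \<mu> assume "eigenvalue (J_mat N) \<mu>" then show "eigenvalue (J_mat N) (of_nat N ^ 2 - 1 - \<mu>)" by (rule imp)
  next
    fix \<mu> assume "eigenvalue (J_mat N) (of_nat N ^ 2 - 1 - \<mu>)"
    from imp[OF this] show "eigenvalue (J_mat N) \<mu>" by simp
  qed
qed

end
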